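(* Let $n\in\mathbb N$, $d\in(0,n)$, and let $S\subset\mathbb R^n$ be the intersection of an open set and a closed set. Let $(S_\lambda)_{\lambda\in\Lambda}$ be a family of relatively open subsets of $S$ with $S=\bigcup_{\lambda\in\Lambda}S_\lambda$. Suppose that for every $\lambda\in\Lambda$ the $d$-dimensional Minkowski content measure on $S_\lambda$ exists. Then the $d$-dimensional Minkowski content measure on $S$ exists.
   Context: For $A\subset\mathbb R^n$ and $r>0$ let $A^r=\{x\in\mathbb R^n:\operatorname{dist}(x,A)<r\}$ and let $\lambda^n$ be Lebesgue measure. The $d$-dimensional Minkowski content of $A$ is $\mathrm{Cont}_d(A)=\lim_{r\to0^+}r^{d-n}\lambda^n(A^r)$ when the limit exists. For $S\subset\mathbb R^n$ which is the intersection of an open set and a closed set, a $d$-dimensional Minkowski content measure on $S$ is a Borel measure $\mu$ on $S$ such that for every compact $K\subset S$: (i) $\mu(K)<\infty$; and (ii) whenever $\mu(\partial_S K)=0$ (where $\partial_S K$ is the relative boundary of $K$ in $S$), $\mathrm{Cont}_d(K)$ exists and equals $\mu(K)$. *)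

theory Defs
  imports "HOL-Analysis.Analysis"
begin

definition nbhd :: "'a::euclidean_space set \<Rightarrow> real \<Rightarrow> 'a set" where
  "nbhd A r = {x. \<exists>a\<in>A. dist x a < r}"

definition has_minkowski_content :: "real \<Rightarrow> 'a::euclidean_space set \<Rightarrow> real \<Rightarrow> bool" where
  "has_minkowski_content d A c \<longleftrightarrow>
     ((\<lambda>r. r powr (d - real DIM('a)) * measure lebesgue (nbhd A r)) \<longlongrightarrow> c) (at_right 0)"

definition minkowski_content_measure :: "real \<Rightarrow> 'a::euclidean_space set \<Rightarrow> 'a measure \<Rightarrow> bool" where
  "minkowski_content_measure d S M \<longleftrightarrow>
     space M = S \<and> sets M = sets (restrict_space borel S) \<and>
     (\<forall>K. compact K \<and> K \<subseteq> S \<longrightarrow>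
        emeasure M K < \<infinity> \<and>
        (emeasure M ((top_of_set S) frontier_of K) = 0 \<longrightarrow>
           has_minkowski_content d K (measure M K)))"

end

theory Submission
  imports Defs
begin

lemma frontier_open_sub:
  fixes S :: "'a::metric_space set"
  assumes "openin (top_of_set S) T" "compact K" "K \<subseteq> T"
  shows "(top_of_set T) frontier_of K = (top_of_set S) frontier_of K"
proof -
  have TS: "T \<subseteq> S" using assms(1) by (meson openin_imp_subset)
  have "top_of_set T = subtopology (top_of_set S) T"
    using TS by (simp add: subtopology_subtopology inf.absorb2)
  then have "(top_of_set T) frontier_of K = T \<inter> (top_of_set S) frontier_of K"
    using assms(1) by (simp add: frontier_of_subtopology_open)
  moreover have "closedin (top_of_set S) K"
    using closed_subset[OF _ compact_imp_closed[OF assms(2)]] assms(3) TS by blast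
  then have "(top_of_set S) frontier_of K \<subseteq> K"
    by (simp add: frontier_of_subset_closedin)
  ultimately show ?thesis using assms(3) by blast
qed

lemma frontier_compact:
  fixes S :: "'a::metric_space set"
  assumes "compact K" "K \<subseteq> S"
  shows "(top_of_set S) frontier_of K \<subseteq> K" "compact ((top_of_set S) frontier_of K)"
proof -
  have cl: "closedin (top_of_set S) K"
    using closed_subset[OF assms(2) compact_imp_closed[OF assms(1)]] .
  then show sub: "(top_of_set S) frontier_of K \<subseteq> K"
    by (simp add: frontier_of_subset_closedin)
  obtain F where F: "closed F" "(top_of_set S) frontier_of K = S \<inter> F"
    using closedin_frontier_of[of "top_of_set S" K] by (auto simp: closedin_closed)
  then have "(top_of_set S) frontier_of K = K \<inter> F" using sub assms(2) by blast
  then show "compact ((top_of_set S) frontier_of K)"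
    using F(1) assms(1) by (simp add: compact_Int_closed)
qed

lemma not_in_frontier:
  assumes "y \<in> P" "open V" "y \<in> V" "S \<inter> V \<subseteq> P" "P \<subseteq> S"
  shows "y \<notin> (top_of_set S) frontier_of P"
proof -
  have "openin (top_of_set S) (S \<inter> V)" using assms(2) by (auto simp: openin_open)
  then have "S \<inter> V \<subseteq> (top_of_set S) interior_of P"
    using assms(4) by (simp add: interior_of_maximal)
  then have "y \<in> (top_of_set S) interior_of P" using assms by auto
  then show ?thesis by (simp add: frontier_of_def)
qed

lemma countable_bad_levels:
  fixes \<mu> :: "'a::metric_space measure" and g :: "'a \<Rightarrow> real"
  assumes sets: "sets \<mu> = sets (restrict_space borel T)"
    and A: "A \<in> sets \<mu>" "emeasure \<mu> A < \<infinity>" and g: "continuous_on UNIV g"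
  shows "countable {r. emeasure \<mu> {y\<in>A. g y = r} \<noteq> 0}"
proof -
  have gb: "g \<in> borel_measurable (restrict_space borel T)"
    by (intro measurable_restrict_space1 borel_measurable_continuous_onI g)
  have gm: "g \<in> borel_measurable (restrict_space \<mu> A)"
  proof -
    have "measurable \<mu> (borel::real measure) = measurable (restrict_space borel T) borel"
      by (rule measurable_cong_sets[OF sets refl])
    then have "g \<in> borel_measurable \<mu>" using gb by simp
    then show ?thesis by (rule measurable_restrict_space1)
  qed
  define N where "N = distr (restrict_space \<mu> A) borel g"
  have spA: "A \<inter> space \<mu> = A" using sets.sets_into_space[OF A(1)] by auto
  have e: "emeasure N B = emeasure \<mu> {y\<in>A. g y \<in> B}" if "B \<in> sets borel" for B
  proof -
    have "emeasure N B = emeasure (restrict_space \<mu> A) (g -` B \<inter> space (restrict_space \<mu> A))"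
      unfolding N_def using gm that by (simp add: emeasure_distr)
    also have "\<dots> = emeasure (restrict_space \<mu> A) {y\<in>A. g y \<in> B}"
      using spA by (auto simp: space_restrict_space intro!: arg_cong2[where f=emeasure])
    also have "\<dots> = emeasure \<mu> {y\<in>A. g y \<in> B}"
      using spA A(1) by (intro emeasure_restrict_space) auto
    finally show ?thesis .
  qed
  have "emeasure N (space N) = emeasure \<mu> A"
    using e[of UNIV] by (simp add: N_def)
  then interpret N: finite_measure N using A(2) by (intro finite_measureI) auto
  have "{r. emeasure \<mu> {y\<in>A. g y = r} \<noteq> 0} = {r. measure N {r} \<noteq> 0}"
  proof -
    have "emeasure \<mu> {y\<in>A. g y = r} = ennreal (measure N {r})" for r
      using e[of "{r}"] by (simp add: N.emeasure_eq_measure)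
    then show ?thesis by auto
  qed
  then show ?thesis using N.countable_support by simp
qed

lemma avoid_countable:
  fixes a b :: real
  assumes "a < b" "countable B"
  obtains s where "a < s" "s < b" "s \<notin> B"
proof -
  have "\<not> {a<..<b} \<subseteq> B"
    using assms uncountable_open_interval countable_subset by blast
  then obtain s where "s \<in> {a<..<b}" "s \<notin> B" by blast
  then show ?thesis using that by auto
qed

lemma nbhd_eq: "nbhd A r = (\<Union>a\<in>A. ball a r)"
  by (auto simp: nbhd_def dist_commute)

lemma open_nbhd: "open (nbhd A r)"
  unfolding nbhd_eq by auto

lemma nbhd_mono: "A \<subseteq> B \<Longrightarrow> nbhd A r \<subseteq> nbhd B r"
  by (auto simp: nbhd_def)

lemma nbhd_Union: "nbhd (\<Union>\<A>) r = (\<Union>A\<in>\<A>. nbhd A r)"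
  by (auto simp: nbhd_def)

lemma nbhd_empty[simp]: "nbhd {} r = {}"
  by (auto simp: nbhd_def)

lemma nbhd_lmeasurable:
  assumes "bounded A" shows "nbhd A r \<in> lmeasurable"
proof -
  obtain e x where "A \<subseteq> cball x e" using assms bounded_subset_cball by blast
  then have "nbhd A r \<subseteq> cball x (e + \<bar>r\<bar>)"
    unfolding nbhd_def by (auto simp: dist_commute) (smt (verit) dist_triangle2 subset_iff mem_cball)
  then have "bounded (nbhd A r)" using bounded_cball bounded_subset by blast
  moreover have "nbhd A r \<in> sets lborel" by (simp add: borel_open open_nbhd)
  then have "nbhd A r \<in> sets lebesgue" by (rule sets_completionI_sets)
  ultimately show ?thesis
    by (intro bounded_set_imp_lmeasurable)
qed

lemma nbhd_disjoint_eventually: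
  fixes A B :: "'a::euclidean_space set"
  assumes "compact A" "compact B" "A \<inter> B = {}"
  shows "eventually (\<lambda>r. nbhd A r \<inter> nbhd B r = {}) (at_right 0)"
proof -
  obtain e where e: "e > 0" "\<forall>x\<in>A. \<forall>y\<in>B. e \<le> dist x y"
    using separate_compact_closed[OF assms(1) compact_imp_closed[OF assms(2)] assms(3)] by blast
  have "nbhd A r \<inter> nbhd B r = {}" if "r < e/2" for r
  proof (rule ccontr)
    assume "nbhd A r \<inter> nbhd B r \<noteq> {}"
    then obtain z a b where "a \<in> A" "b \<in> B" "dist z a < r" "dist z b < r"
      by (auto simp: nbhd_def)
    moreover have "dist a b \<le> dist z a + dist z b" by (metis dist_commute dist_triangle)
    ultimately show False using e that by fastforce
  qed
  moreover have "eventually (\<lambda>r. r < e/2) (at_right (0::real))"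
    using eventually_at_right_real[of 0 "e/2"] e(1) by (auto elim: eventually_mono)
  ultimately show ?thesis by (metis (mono_tags, lifting) eventually_mono)
qed

lemma nbhd_bounds:
  fixes K :: "'a::euclidean_space set" and \<Q> \<R> :: "'a set set"
  assumes fin: "finite \<Q>" "finite \<R>" and cQ: "\<And>Q. Q \<in> \<Q> \<Longrightarrow> compact Q"
    and cR: "\<And>R. R \<in> \<R> \<Longrightarrow> compact R" and dis: "pairwise disjnt \<Q>"
    and sub: "\<Union>\<Q> \<subseteq> K" "K \<subseteq> \<Union>\<Q> \<union> \<Union>\<R>" and K: "compact K"
  shows "eventually (\<lambda>r. (\<Sum>Q\<in>\<Q>. measure lebesgue (nbhd Q r)) \<le> measure lebesgue (nbhd K r) \<and>
     measure lebesgue (nbhd K r) \<le> (\<Sum>Q\<in>\<Q>. measure lebesgue (nbhd Q r)) + (\<Sum>R\<in>\<R>. measure lebesgue (nbhd R r))) (at_right 0)"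
proof -
  have lmK: "nbhd K r \<in> lmeasurable" for r
    using K by (simp add: compact_imp_bounded nbhd_lmeasurable)
  have lmQ: "nbhd Q r \<in> lmeasurable" if "Q \<in> \<Q> \<union> \<R>" for Q r
    using that cQ cR by (auto simp: compact_imp_bounded nbhd_lmeasurable)
  have up: "measure lebesgue (nbhd K r) \<le> (\<Sum>Q\<in>\<Q>. measure lebesgue (nbhd Q r)) + (\<Sum>R\<in>\<R>. measure lebesgue (nbhd R r))" for r
  proof -
    have "nbhd K r \<subseteq> (\<Union>Q\<in>\<Q>\<union>\<R>. nbhd Q r)"
      using nbhd_mono[OF sub(2), of r] by (simp add: nbhd_Union[symmetric])
    moreover have "(\<Union>Q\<in>\<Q>\<union>\<R>. nbhd Q r) \<in> lmeasurable"
      using fin lmQ by (intro fmeasurable.finite_UN) auto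
    ultimately have "measure lebesgue (nbhd K r) \<le> measure lebesgue (\<Union>Q\<in>\<Q>\<union>\<R>. nbhd Q r)"
      using lmK by (intro measure_mono_fmeasurable) auto
    also have "\<dots> \<le> (\<Sum>Q\<in>\<Q>\<union>\<R>. measure lebesgue (nbhd Q r))"
      using fin lmQ by (intro measure_UNION_le) auto
    also have "\<dots> \<le> (\<Sum>Q\<in>\<Q>. measure lebesgue (nbhd Q r)) + (\<Sum>R\<in>\<R>. measure lebesgue (nbhd R r))"
      using fin by (simp add: sum_Un sum_nonneg)
    finally show ?thesis .
  qed
  have ev: "eventually (\<lambda>r. \<forall>p\<in>\<Q>\<times>\<Q>. fst p \<noteq> snd p \<longrightarrow> nbhd (fst p) r \<inter> nbhd (snd p) r = {}) (at_right 0)"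
  proof (rule eventually_ball_finite)
    show "finite (\<Q>\<times>\<Q>)" using fin by auto
    show "\<forall>p\<in>\<Q>\<times>\<Q>. eventually (\<lambda>r. fst p \<noteq> snd p \<longrightarrow> nbhd (fst p) r \<inter> nbhd (snd p) r = {}) (at_right 0)"
    proof
      fix p assume p: "p \<in> \<Q>\<times>\<Q>"
      show "eventually (\<lambda>r. fst p \<noteq> snd p \<longrightarrow> nbhd (fst p) r \<inter> nbhd (snd p) r = {}) (at_right 0)"
      proof (cases "fst p = snd p")
        case False
        have "fst p \<in> \<Q>" "snd p \<in> \<Q>" using p by auto
        then have "fst p \<inter> snd p = {}" using dis False unfolding pairwise_def disjnt_def by blast
        then show ?thesis using p cQ by (auto intro: nbhd_disjoint_eventually elim: eventually_mono)
      qed simp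
    qed
  qed
  show ?thesis
  proof (rule eventually_mono[OF ev], rule conjI)
    fix r assume H: "\<forall>p\<in>\<Q>\<times>\<Q>. fst p \<noteq> snd p \<longrightarrow> nbhd (fst p) r \<inter> nbhd (snd p) r = {}"
    have "(\<Sum>Q\<in>\<Q>. measure lebesgue (nbhd Q r)) = measure lebesgue (\<Union>Q\<in>\<Q>. nbhd Q r)"
      using fin lmQ H by (intro measure_UNION'[symmetric]) (auto simp: pairwise_def disjnt_def)
    also have "\<dots> \<le> measure lebesgue (nbhd K r)"
    proof (intro measure_mono_fmeasurable lmK)
      show "(\<Union>Q\<in>\<Q>. nbhd Q r) \<subseteq> nbhd K r"
        using nbhd_mono[OF sub(1), of r] by (simp add: nbhd_Union)
      show "(\<Union>Q\<in>\<Q>. nbhd Q r) \<in> sets lebesgue"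
        using fin lmQ by (intro fmeasurable.finite_UN[THEN fmeasurableD]) auto
    qed
    finally show "(\<Sum>Q\<in>\<Q>. measure lebesgue (nbhd Q r)) \<le> measure lebesgue (nbhd K r)" .
    show "measure lebesgue (nbhd K r) \<le> (\<Sum>Q\<in>\<Q>. measure lebesgue (nbhd Q r)) + (\<Sum>R\<in>\<R>. measure lebesgue (nbhd R r))"
      by (rule up)
  qed
qed

lemma content_from_pieces:
  fixes K :: "'a::euclidean_space set" and c :: real and mP :: "'a set \<Rightarrow> real"
  assumes K: "compact K"
    and H: "\<And>\<epsilon>. \<epsilon> > 0 \<Longrightarrow> \<exists>\<Q> \<R>. finite \<Q> \<and> finite \<R> \<and> (\<forall>P\<in>\<Q>\<union>\<R>. compact P \<and> has_minkowski_content d P (mP P))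
        \<and> pairwise disjnt \<Q> \<and> \<Union>\<Q> \<subseteq> K \<and> K \<subseteq> \<Union>\<Q> \<union> \<Union>\<R>
        \<and> c - \<epsilon> \<le> (\<Sum>Q\<in>\<Q>. mP Q) \<and> (\<Sum>Q\<in>\<Q>. mP Q) \<le> c \<and> (\<Sum>R\<in>\<R>. mP R) \<le> \<epsilon>"
  shows "has_minkowski_content d K c"
  unfolding has_minkowski_content_def
proof (rule tendstoI)
  fix \<epsilon> :: real assume "\<epsilon> > 0"
  define g where "g (P::'a set) (r::real) = r powr (d - real DIM('a)) * measure lebesgue (nbhd P r)" for P r
  obtain \<Q> \<R> where fin: "finite \<Q>" "finite \<R>"
    and good: "\<forall>P\<in>\<Q>\<union>\<R>. compact P \<and> has_minkowski_content d P (mP P)"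
    and dis: "pairwise disjnt \<Q>" and sub: "\<Union>\<Q> \<subseteq> K" "K \<subseteq> \<Union>\<Q> \<union> \<Union>\<R>"
    and m: "c - \<epsilon>/4 \<le> (\<Sum>Q\<in>\<Q>. mP Q)" "(\<Sum>Q\<in>\<Q>. mP Q) \<le> c" "(\<Sum>R\<in>\<R>. mP R) \<le> \<epsilon>/4"
    using H[of "\<epsilon>/4"] \<open>\<epsilon> > 0\<close> by auto
  have lim: "((\<lambda>r. g P r) \<longlongrightarrow> mP P) (at_right 0)" if "P \<in> \<Q>\<union>\<R>" for P
    using good that unfolding has_minkowski_content_def g_def by auto
  have limQ: "((\<lambda>r. \<Sum>Q\<in>\<Q>. g Q r) \<longlongrightarrow> (\<Sum>Q\<in>\<Q>. mP Q)) (at_right 0)"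
    by (intro tendsto_sum lim) auto
  have limR: "((\<lambda>r. \<Sum>R\<in>\<R>. g R r) \<longlongrightarrow> (\<Sum>R\<in>\<R>. mP R)) (at_right 0)"
    by (intro tendsto_sum lim) auto
  have e1: "eventually (\<lambda>r. dist (\<Sum>Q\<in>\<Q>. g Q r) (\<Sum>Q\<in>\<Q>. mP Q) < \<epsilon>/4) (at_right 0)"
    using tendstoD[OF limQ, of "\<epsilon>/4"] \<open>\<epsilon> > 0\<close> by simp
  have e2: "eventually (\<lambda>r. dist (\<Sum>R\<in>\<R>. g R r) (\<Sum>R\<in>\<R>. mP R) < \<epsilon>/4) (at_right 0)"
    using tendstoD[OF limR, of "\<epsilon>/4"] \<open>\<epsilon> > 0\<close> by simp
  have e3: "eventually (\<lambda>r. (\<Sum>Q\<in>\<Q>. measure lebesgue (nbhd Q r)) \<le> measure lebesgue (nbhd K r) \<and>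
     measure lebesgue (nbhd K r) \<le> (\<Sum>Q\<in>\<Q>. measure lebesgue (nbhd Q r)) + (\<Sum>R\<in>\<R>. measure lebesgue (nbhd R r))) (at_right 0)"
    using good by (intro nbhd_bounds[OF fin _ _ dis sub K]) auto
  have e4: "eventually (\<lambda>r. 0 < r) (at_right (0::real))"
    by (rule eventually_at_right_less)
  show "eventually (\<lambda>r. dist (r powr (d - real DIM('a)) * measure lebesgue (nbhd K r)) c < \<epsilon>) (at_right 0)"
    using e1 e2 e3 e4
  proof eventually_elim
    case (elim r)
    define w where "w = r powr (d - real DIM('a))"
    have w: "w \<ge> 0" unfolding w_def by simp
    have sQ: "(\<Sum>Q\<in>\<Q>. g Q r) = w * (\<Sum>Q\<in>\<Q>. measure lebesgue (nbhd Q r))"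
      unfolding g_def w_def by (simp add: sum_distrib_left)
    have sR: "(\<Sum>R\<in>\<R>. g R r) = w * (\<Sum>R\<in>\<R>. measure lebesgue (nbhd R r))"
      unfolding g_def w_def by (simp add: sum_distrib_left)
    have lo: "(\<Sum>Q\<in>\<Q>. g Q r) \<le> w * measure lebesgue (nbhd K r)"
      unfolding sQ using elim(3) w by (intro mult_left_mono) auto
    have hi: "w * measure lebesgue (nbhd K r) \<le> (\<Sum>Q\<in>\<Q>. g Q r) + (\<Sum>R\<in>\<R>. g R r)"
      unfolding sQ sR distrib_left[symmetric] using elim(3) w by (intro mult_left_mono) auto
    show ?case
      using lo hi elim(1,2) m unfolding w_def dist_real_def by (auto simp: abs_real_def split: if_splits)
  qed
qed

lemma frontier_piece:
  fixes S :: "'a::metric_space set"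
  assumes P: "compact P" "P \<subseteq> K" and K: "K \<subseteq> S"
    and loc: "\<And>y. y \<in> P \<Longrightarrow> y \<notin> Z \<Longrightarrow> \<exists>V. open V \<and> y \<in> V \<and> V \<inter> K \<subseteq> P"
  shows "(top_of_set S) frontier_of P \<subseteq> (top_of_set S) frontier_of K \<union> Z"
proof
  fix y assume y: "y \<in> (top_of_set S) frontier_of P"
  show "y \<in> (top_of_set S) frontier_of K \<union> Z"
  proof (rule ccontr)
    assume nz: "y \<notin> (top_of_set S) frontier_of K \<union> Z"
    have PS: "P \<subseteq> S" using P K by auto
    have yP: "y \<in> P" using frontier_compact(1)[OF P(1) PS] y by auto
    then have "y \<in> (top_of_set S) closure_of K"
      using P K closure_of_subset[of K "top_of_set S"] by auto
    then have yi: "y \<in> (top_of_set S) interior_of K"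
      using nz by (auto simp: frontier_of_def)
    obtain V0 where V0: "open V0" "(top_of_set S) interior_of K = S \<inter> V0"
      by (meson openin_interior_of openin_open)
    obtain V where V: "open V" "y \<in> V" "V \<inter> K \<subseteq> P" using loc yP nz by blast
    have "S \<inter> (V \<inter> V0) \<subseteq> P"
      using V(3) V0(2) interior_of_subset[of "top_of_set S" K] by blast
    moreover have "y \<in> V \<inter> V0" using V yi V0 by auto
    ultimately have "y \<notin> (top_of_set S) frontier_of P"
      using not_in_frontier[OF yP _ _ _ PS] V(1) V0(1) by blast
    then show False using y by simp
  qed
qed

lemma pieces:
  fixes S K :: "'a::euclidean_space set" and M :: "'a measure" and \<rho> :: "'a \<Rightarrow> real"
  assumes Sb: "S \<in> sets borel" and setsM: "sets M = sets (restrict_space borel S)"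
    and K: "compact K" "K \<subseteq> S" and frK: "emeasure M ((top_of_set S) frontier_of K) = 0"
    and \<rho>: "\<And>x. x \<in> S \<Longrightarrow> \<rho> x > 0"
    and finP: "\<And>P. compact P \<Longrightarrow> P \<subseteq> S \<Longrightarrow> emeasure M P < \<infinity>"
    and \<epsilon>: "\<epsilon> > 0"
  shows "\<exists>\<Q> \<R>. finite \<Q> \<and> finite \<R> \<and>
    (\<forall>P\<in>\<Q>\<union>\<R>. compact P \<and> (\<exists>x\<in>S. P \<subseteq> cball x (\<rho> x) \<inter> S) \<and> emeasure M ((top_of_set S) frontier_of P) = 0)
    \<and> pairwise disjnt \<Q> \<and> \<Union>\<Q> \<subseteq> K \<and> K \<subseteq> \<Union>\<Q> \<union> \<Union>\<R>
    \<and> measure M K - \<epsilon> \<le> (\<Sum>Q\<in>\<Q>. measure M Q) \<and> (\<Sum>Q\<in>\<Q>. measure M Q) \<le> measure M K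
    \<and> (\<Sum>R\<in>\<R>. measure M R) \<le> \<epsilon>"
proof -
  have inM: "X \<in> sets M \<longleftrightarrow> X \<subseteq> S \<and> X \<in> sets borel" for X
    using Sb by (simp add: setsM sets_restrict_space_iff)
  have cM: "P \<in> sets M" if "compact P" "P \<subseteq> S" for P
    using that by (simp add: inM borel_closed compact_imp_closed)
  have fM: "P \<in> fmeasurable M" if "compact P" "P \<subseteq> S" for P
    using that cM finP by (intro fmeasurableI) auto
  have sphK: "compact {y\<in>K. dist a y = r}" for a r
  proof -
    have "{y\<in>K. dist a y = r} = K \<inter> sphere a r" by auto
    then show ?thesis using K(1) by (simp add: compact_Int_closed)
  qed
  have sphKS: "{y\<in>K. dist a y = r} \<subseteq> S" for a r using K by auto
  have "K \<subseteq> (\<Union>x\<in>K. ball x (\<rho> x / 2))"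
    using K \<rho> by force
  then obtain X where X: "X \<subseteq> K" "finite X" "K \<subseteq> (\<Union>x\<in>X. ball x (\<rho> x / 2))"
    using compactE_image[OF K(1), of K "\<lambda>x. ball x (\<rho> x / 2)"] by auto
  obtain xs where xs: "set xs = X" using finite_list[OF X(2)] by blast
  define N where "N = length xs"
  define e where "e i = xs ! i" for i
  have eK: "e i \<in> K" if "i < N" for i
    using that X(1) xs nth_mem unfolding e_def N_def by blast
  then have eS: "e i \<in> S" if "i < N" for i using that K by auto
  have cov: "\<exists>i<N. dist (e i) y < \<rho> (e i) / 2" if yK: "y \<in> K" for y
  proof -
    obtain x where "x \<in> X" "y \<in> ball x (\<rho> x / 2)" using X(3) yK by blast
    moreover then obtain i where "i < N" "e i = x"
      using xs unfolding N_def e_def by (metis in_set_conv_nth)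
    ultimately show ?thesis by auto
  qed
  have "\<exists>s. \<rho> (e i) / 2 < s \<and> s < 3 * \<rho> (e i) / 4 \<and> emeasure M {y\<in>K. dist (e i) y = s} = 0"
    if "i < N" for i
  proof -
    have "countable {r. emeasure M {y\<in>K. dist (e i) y = r} \<noteq> 0}"
      by (rule countable_bad_levels[OF setsM cM[OF K] finP[OF K]]) (intro continuous_intros)
    moreover have "\<rho> (e i) / 2 < 3 * \<rho> (e i) / 4" using \<rho>[OF eS[OF that]] by simp
    ultimately obtain s where "\<rho> (e i) / 2 < s" "s < 3 * \<rho> (e i) / 4"
      "s \<notin> {r. emeasure M {y\<in>K. dist (e i) y = r} \<noteq> 0}"
      using avoid_countable by blast
    then show ?thesis by auto
  qed
  then obtain s where s: "\<And>i. i < N \<Longrightarrow> \<rho> (e i) / 2 < s i \<and> s i < 3 * \<rho> (e i) / 4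
      \<and> emeasure M {y\<in>K. dist (e i) y = s i} = 0"
    by metis
  have sN: "emeasure M {y\<in>K. dist (e i) y = s i} = 0" if "i < N" for i using s[OF that] by blast
  define ann where "ann i t = {y\<in>K. s i \<le> dist (e i) y \<and> dist (e i) y \<le> s i + t}" for i t
  have ann_compact: "compact (ann i t)" for i t
  proof -
    have "ann i t = K \<inter> (cball (e i) (s i + t) - ball (e i) (s i))" by (auto simp: ann_def)
    then show ?thesis using K(1) by (simp add: compact_Int_closed closed_Diff)
  qed
  have annS: "ann i t \<subseteq> S" for i t using K by (auto simp: ann_def)
  define a where "a = \<epsilon> / (real N + 1)"
  have a_pos: "a > 0" using \<epsilon> by (simp add: a_def)
  have "\<exists>n. emeasure M (ann i (1 / (real n + 1))) < ennreal a" if "i < N" for i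
  proof -
    have dec: "decseq (\<lambda>n. ann i (1 / (real n + 1)))"
    proof (rule decseq_SucI)
      fix n
      have "1 / (real (Suc n) + 1) \<le> 1 / (real n + 1)" by (simp add: frac_le)
      then show "ann i (1 / (real (Suc n) + 1)) \<subseteq> ann i (1 / (real n + 1))"
        by (auto simp: ann_def)
    qed
    have inter: "(\<Inter>n. ann i (1 / (real n + 1))) = {y\<in>K. dist (e i) y = s i}"
    proof (intro equalityI subsetI)
      fix y assume y: "y \<in> (\<Inter>n. ann i (1 / (real n + 1)))"
      have "dist (e i) y \<le> s i"
      proof (rule ccontr)
        assume "\<not> dist (e i) y \<le> s i"
        then obtain n where "inverse (real (Suc n)) < dist (e i) y - s i"
          using reals_Archimedean[of "dist (e i) y - s i"] by auto
        moreover have "y \<in> ann i (1 / (real n + 1))" using y by auto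
        ultimately show False by (auto simp: ann_def inverse_eq_divide add.commute)
      qed
      then show "y \<in> {y\<in>K. dist (e i) y = s i}" using y by (auto simp: ann_def)
    qed (auto simp: ann_def)
    have "(\<lambda>n. emeasure M (ann i (1 / (real n + 1)))) \<longlonglongrightarrow> emeasure M (\<Inter>n. ann i (1 / (real n + 1)))"
      using cM[OF ann_compact annS] finP[OF ann_compact annS]
      by (intro Lim_emeasure_decseq dec) (auto simp: less_top[symmetric])
    then have "(\<lambda>n. emeasure M (ann i (1 / (real n + 1)))) \<longlonglongrightarrow> 0"
      using inter s[OF that] by simp
    then have "eventually (\<lambda>n. emeasure M (ann i (1 / (real n + 1))) < ennreal a) sequentially"
      using a_pos by (intro order_tendstoD(2)) auto
    then show ?thesis by (auto simp: eventually_sequentially)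
  qed
  then obtain n where n: "\<And>i. i < N \<Longrightarrow> emeasure M (ann i (1 / (real (n i) + 1))) < ennreal a"
    by metis
  define nm where "nm = (\<Sum>i<N. n i)"
  have ann_small: "emeasure M (ann i t) < ennreal a" if "i < N" "t \<le> 1 / (real nm + 1)" for i t
  proof -
    have "n i \<le> nm" unfolding nm_def using that(1) by (intro member_le_sum) auto
    then have "1 / (real nm + 1) \<le> 1 / (real (n i) + 1)" by (simp add: frac_le)
    then have "ann i t \<subseteq> ann i (1 / (real (n i) + 1))" using that(2) by (auto simp: ann_def)
    then have "emeasure M (ann i t) \<le> emeasure M (ann i (1 / (real (n i) + 1)))"
      by (intro emeasure_mono cM ann_compact annS)
    with n[OF that(1)] show ?thesis by simp
  qed
  define D where "D = insert (1 / (real nm + 1)) ((\<lambda>i. \<rho> (e i) / 4) ` {..<N})"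
  define \<delta>0 where "\<delta>0 = Min D"
  have finD: "finite D" "D \<noteq> {}" by (auto simp: D_def)
  have D0: "\<delta>0 > 0" unfolding \<delta>0_def using finD \<rho> eS by (subst Min_gr_iff) (auto simp: D_def)
  have D1: "\<delta>0 \<le> 1 / (real nm + 1)" unfolding \<delta>0_def using finD by (intro Min_le) (auto simp: D_def)
  have D2: "\<delta>0 \<le> \<rho> (e i) / 4" if "i < N" for i
    unfolding \<delta>0_def using finD that by (intro Min_le) (auto simp: D_def)
  define B where "B = (\<Union>i<N. (\<lambda>r. r - s i) ` {r. emeasure M {y\<in>K. dist (e i) y = r} \<noteq> 0})"
  have "countable B" unfolding B_def
    by (intro countable_UN countable_image countable_bad_levels[OF setsM cM[OF K] finP[OF K]])
      (auto intro!: continuous_intros)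
  then obtain \<delta> where \<delta>: "0 < \<delta>" "\<delta> < \<delta>0" "\<delta> \<notin> B"
    using avoid_countable[OF D0] by blast
  have \<delta>null: "emeasure M {y\<in>K. dist (e i) y = s i + \<delta>} = 0" if "i < N" for i
  proof (rule ccontr)
    assume "emeasure M {y\<in>K. dist (e i) y = s i + \<delta>} \<noteq> 0"
    then have "\<delta> \<in> (\<lambda>r. r - s i) ` {r. emeasure M {y\<in>K. dist (e i) y = r} \<noteq> 0}"
      by (intro image_eqI[of _ _ "s i + \<delta>"]) auto
    then show False using \<delta>(3) that unfolding B_def by auto
  qed
  have nullK: "{y\<in>K. dist a y = r} \<in> null_sets M" if "emeasure M {y\<in>K. dist a y = r} = 0" for a r
    using that cM[OF sphK sphKS] by auto
  have frKnull: "(top_of_set S) frontier_of K \<in> null_sets M"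
    using frK cM[OF frontier_compact(2)[OF K] order_trans[OF frontier_compact(1)[OF K] K(2)]] by auto

  define Q where "Q i = {y\<in>K. dist (e i) y \<le> s i \<and> (\<forall>j<i. s j + \<delta> \<le> dist (e j) y)}" for i
  define R where "R i = ann i \<delta>" for i
  have Qc: "compact (Q i)" for i
  proof -
    have "Q i = K \<inter> (cball (e i) (s i) \<inter> (\<Inter>j\<in>{..<i}. - ball (e j) (s j + \<delta>)))"
      by (auto simp: Q_def not_less)
    then show ?thesis using K(1)
      by (simp add: compact_Int_closed closed_Int closed_INT closed_Compl)
  qed
  have QS: "Q i \<subseteq> S" "Q i \<subseteq> K" for i using K by (auto simp: Q_def)
  have Rc: "compact (R i)" for i by (simp add: R_def ann_compact)
  have RS: "R i \<subseteq> S" "R i \<subseteq> K" for i using K by (auto simp: R_def ann_def)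
  have Qball: "Q i \<subseteq> cball (e i) (\<rho> (e i)) \<inter> S" if "i < N" for i
    using s[OF that] \<rho>[OF eS[OF that]] QS by (auto simp: Q_def)
  have Rball: "R i \<subseteq> cball (e i) (\<rho> (e i)) \<inter> S" if "i < N" for i
    using s[OF that] D2[OF that] \<delta> RS by (auto simp: R_def ann_def)
  have Qfr: "emeasure M ((top_of_set S) frontier_of Q i) = 0" if "i < N" for i
  proof -
    define Z where "Z = {y\<in>K. dist (e i) y = s i} \<union> (\<Union>j\<in>{..<i}. {y\<in>K. dist (e j) y = s j + \<delta>})"
    have "(top_of_set S) frontier_of Q i \<subseteq> (top_of_set S) frontier_of K \<union> Z"
    proof (rule frontier_piece[OF Qc QS(2) K(2)])
      fix y assume y: "y \<in> Q i" "y \<notin> Z"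
      define V where "V = ball (e i) (s i) \<inter> (\<Inter>j\<in>{..<i}. - cball (e j) (s j + \<delta>))"
      have "open V" unfolding V_def by (intro open_Int open_INT) auto
      moreover have "y \<in> V" using y unfolding V_def Z_def Q_def by (force simp: dist_commute)
      moreover have "V \<inter> K \<subseteq> Q i" unfolding V_def Q_def by (force simp: dist_commute)
      ultimately show "\<exists>V. open V \<and> y \<in> V \<and> V \<inter> K \<subseteq> Q i" by blast
    qed
    moreover have "(top_of_set S) frontier_of K \<union> Z \<in> null_sets M"
      unfolding Z_def using that
      by (intro null_sets.Un frKnull nullK sN null_sets_UN' \<delta>null) auto
    moreover have "(top_of_set S) frontier_of Q i \<in> sets M"
      using frontier_compact[OF Qc QS(1)] QS(1) by (intro cM) blast+
    ultimately show ?thesis using null_sets_subset by blast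
  qed
  have Rfr: "emeasure M ((top_of_set S) frontier_of R i) = 0" if "i < N" for i
  proof -
    define Z where "Z = {y\<in>K. dist (e i) y = s i} \<union> {y\<in>K. dist (e i) y = s i + \<delta>}"
    have "(top_of_set S) frontier_of R i \<subseteq> (top_of_set S) frontier_of K \<union> Z"
    proof (rule frontier_piece[OF Rc RS(2) K(2)])
      fix y assume y: "y \<in> R i" "y \<notin> Z"
      define V where "V = ball (e i) (s i + \<delta>) - cball (e i) (s i)"
      have "open V" unfolding V_def by auto
      moreover have "y \<in> V" using y unfolding V_def Z_def R_def ann_def by (force simp: dist_commute)
      moreover have "V \<inter> K \<subseteq> R i" unfolding V_def R_def ann_def by (force simp: dist_commute)
      ultimately show "\<exists>V. open V \<and> y \<in> V \<and> V \<inter> K \<subseteq> R i" by blast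
    qed
    moreover have "(top_of_set S) frontier_of K \<union> Z \<in> null_sets M"
      unfolding Z_def using that
      by (intro null_sets.Un frKnull nullK sN \<delta>null) auto
    moreover have "(top_of_set S) frontier_of R i \<in> sets M"
      using frontier_compact[OF Rc RS(1)] RS(1) by (intro cM) blast+
    ultimately show ?thesis using null_sets_subset by blast
  qed
  define \<Q> where "\<Q> = Q ` {..<N}"
  define \<R> where "\<R> = R ` {..<N}"
  have fin: "finite \<Q>" "finite \<R>" by (auto simp: \<Q>_def \<R>_def)
  have good: "\<forall>P\<in>\<Q>\<union>\<R>. compact P \<and> (\<exists>x\<in>S. P \<subseteq> cball x (\<rho> x) \<inter> S) \<and> emeasure M ((top_of_set S) frontier_of P) = 0"
    unfolding \<Q>_def \<R>_def using Qc Rc Qball Rball Qfr Rfr eS by blast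
  have dis: "pairwise disjnt \<Q>"
  proof -
    have "disjnt (Q i) (Q j)" if "i < j" for i j
      using that s \<delta>(1) unfolding disjnt_def Q_def by force
    then show ?thesis unfolding \<Q>_def pairwise_def
      by (metis disjnt_sym image_iff linorder_neqE_nat)
  qed
  have subK: "\<Union>\<Q> \<subseteq> K" using QS by (auto simp: \<Q>_def)
  have covK: "K \<subseteq> \<Union>\<Q> \<union> \<Union>\<R>"
  proof
    fix y assume y: "y \<in> K"
    obtain i where i: "i < N" "dist (e i) y < \<rho> (e i) / 2" using cov[OF y] by blast
    define i0 where "i0 = (LEAST i. i < N \<and> dist (e i) y \<le> s i)"
    have ex: "i < N \<and> dist (e i) y \<le> s i" using i s[OF i(1)] by auto
    have i0: "i0 < N" "dist (e i0) y \<le> s i0" using LeastI[of "\<lambda>i. i < N \<and> dist (e i) y \<le> s i", OF ex]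
      unfolding i0_def by auto
    have min: "\<not> dist (e j) y \<le> s j" if "j < i0" for j
      using not_less_Least[OF that[unfolded i0_def]] that i0(1) by auto
    show "y \<in> \<Union>\<Q> \<union> \<Union>\<R>"
    proof (cases "\<forall>j<i0. s j + \<delta> \<le> dist (e j) y")
      case True
      then have "y \<in> Q i0" using y i0 by (auto simp: Q_def)
      then show ?thesis using i0 by (auto simp: \<Q>_def)
    next
      case False
      then obtain j where j: "j < i0" "dist (e j) y < s j + \<delta>" by auto
      then have "y \<in> R j" using min[OF j(1)] y by (auto simp: R_def ann_def)
      then show ?thesis using j i0 by (auto simp: \<R>_def)
    qed
  qed
  have fmQR: "P \<in> fmeasurable M" if "P \<in> \<Q> \<union> \<R>" for P
    using that QS RS Qc Rc fM unfolding \<Q>_def \<R>_def by auto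
  have fmK: "K \<in> fmeasurable M" using fM K by auto
  have sumQ: "(\<Sum>Q\<in>\<Q>. measure M Q) = measure M (\<Union>\<Q>)"
    using fin fmQR dis by (intro measure_Union'[symmetric]) auto
  have UQ: "\<Union>\<Q> \<in> fmeasurable M" using fin fmQR by (intro fmeasurable.finite_Union) auto
  have le1: "(\<Sum>Q\<in>\<Q>. measure M Q) \<le> measure M K"
    unfolding sumQ using UQ subK fmK by (intro measure_mono_fmeasurable) auto
  have le2: "measure M K \<le> (\<Sum>Q\<in>\<Q>. measure M Q) + (\<Sum>R\<in>\<R>. measure M R)"
  proof -
    have "\<Union>(\<Q>\<union>\<R>) \<in> fmeasurable M" using fin fmQR by (intro fmeasurable.finite_Union) auto
    then have "measure M K \<le> measure M (\<Union>(\<Q>\<union>\<R>))"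
      using covK fmK by (intro measure_mono_fmeasurable) auto
    also have "\<dots> \<le> (\<Sum>P\<in>\<Q>\<union>\<R>. measure M P)"
      using fin fmQR by (intro measure_Union_le) auto
    also have "\<dots> \<le> (\<Sum>Q\<in>\<Q>. measure M Q) + (\<Sum>R\<in>\<R>. measure M R)"
      using fin by (simp add: sum_Un sum_nonneg)
    finally show ?thesis .
  qed
  have le3: "(\<Sum>R\<in>\<R>. measure M R) \<le> \<epsilon>"
  proof -
    have Ra: "measure M (R i) \<le> a" if "i < N" for i
    proof -
      have "emeasure M (R i) < ennreal a"
        unfolding R_def using that D1 \<delta> by (intro ann_small) auto
      then show ?thesis unfolding measure_def using a_pos by (intro enn2real_leI) auto
    qed
    have "(\<Sum>R\<in>\<R>. measure M R) \<le> (\<Sum>i<N. measure M (R i))"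
      unfolding \<R>_def using sum_image_le[of "{..<N}" "measure M" R] by (simp add: comp_def)
    also have "\<dots> \<le> real N * a"
      using sum_bounded_above[of "{..<N}" "\<lambda>i. measure M (R i)" a] Ra by simp
    also have "\<dots> \<le> \<epsilon>" unfolding a_def using \<epsilon> by (simp add: field_simps)
    finally show ?thesis .
  qed
  show ?thesis
    using fin good dis subK covK le1 le2 le3 by (intro exI[of _ \<Q>] exI[of _ \<R>]) auto
qed

lemma local_to_global:
  fixes S :: "'a::euclidean_space set" and M :: "'a measure"
  assumes SUC: "open U" "closed C" "S = U \<inter> C"
    and spM: "space M = S" and setsM: "sets M = sets (restrict_space borel S)"
    and loc: "\<And>x. x \<in> S \<Longrightarrow> \<exists>\<rho>>0. \<forall>P. compact P \<and> P \<subseteq> cball x \<rho> \<inter> S \<longrightarrow>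
        emeasure M P < \<infinity> \<and> (emeasure M ((top_of_set S) frontier_of P) = 0 \<longrightarrow> has_minkowski_content d P (measure M P))"
  shows "minkowski_content_measure d S M"
proof -
  have Sb: "S \<in> sets borel" using SUC by (simp add: borel_open borel_closed sets.Int)
  have inM: "X \<in> sets M \<longleftrightarrow> X \<subseteq> S \<and> X \<in> sets borel" for X
    using Sb by (simp add: setsM sets_restrict_space_iff)
  have cM: "P \<in> sets M" if "compact P" "P \<subseteq> S" for P
    using that by (simp add: inM borel_closed compact_imp_closed)
  have loc': "\<exists>\<rho>>0. compact (cball x \<rho> \<inter> S) \<and> (\<forall>P. compact P \<and> P \<subseteq> cball x \<rho> \<inter> S \<longrightarrow>
        emeasure M P < \<infinity> \<and> (emeasure M ((top_of_set S) frontier_of P) = 0 \<longrightarrow> has_minkowski_content d P (measure M P)))"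
    if x: "x \<in> S" for x
  proof -
    obtain \<rho>1 where \<rho>1: "\<rho>1 > 0" "\<forall>P. compact P \<and> P \<subseteq> cball x \<rho>1 \<inter> S \<longrightarrow>
        emeasure M P < \<infinity> \<and> (emeasure M ((top_of_set S) frontier_of P) = 0 \<longrightarrow> has_minkowski_content d P (measure M P))"
      using loc[OF x] by blast
    have xU: "x \<in> U" using x SUC(3) by auto
    obtain \<rho>2 where \<rho>2: "\<rho>2 > 0" "cball x \<rho>2 \<subseteq> U"
      using open_contains_cball[THEN iffD1, OF SUC(1)] xU by blast
    define \<rho> where "\<rho> = min \<rho>1 \<rho>2"
    have pos: "\<rho> > 0" using \<rho>1(1) \<rho>2(1) by (simp add: \<rho>_def)
    have "cball x \<rho> \<inter> S = cball x \<rho> \<inter> C"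
      using \<rho>2 SUC(3) unfolding \<rho>_def by auto
    then have comp: "compact (cball x \<rho> \<inter> S)" using SUC(2) by (simp add: compact_Int_closed)
    have sub: "cball x \<rho> \<subseteq> cball x \<rho>1" unfolding \<rho>_def by auto
    have "\<forall>P. compact P \<and> P \<subseteq> cball x \<rho> \<inter> S \<longrightarrow>
        emeasure M P < \<infinity> \<and> (emeasure M ((top_of_set S) frontier_of P) = 0 \<longrightarrow> has_minkowski_content d P (measure M P))"
    proof (intro allI impI)
      fix P assume P: "compact P \<and> P \<subseteq> cball x \<rho> \<inter> S"
      then have "compact P \<and> P \<subseteq> cball x \<rho>1 \<inter> S" using sub by blast
      then show "emeasure M P < \<infinity> \<and> (emeasure M ((top_of_set S) frontier_of P) = 0 \<longrightarrow> has_minkowski_content d P (measure M P))"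
        using \<rho>1(2) by blast
    qed
    then show ?thesis using pos comp by blast
  qed
  then obtain \<rho> where \<rho>: "\<And>x. x \<in> S \<Longrightarrow> \<rho> x > 0 \<and> compact (cball x (\<rho> x) \<inter> S) \<and> (\<forall>P. compact P \<and> P \<subseteq> cball x (\<rho> x) \<inter> S \<longrightarrow>
        emeasure M P < \<infinity> \<and> (emeasure M ((top_of_set S) frontier_of P) = 0 \<longrightarrow> has_minkowski_content d P (measure M P)))"
  proof -
    from loc' have "\<forall>x\<in>S. \<exists>r. r > 0 \<and> compact (cball x r \<inter> S) \<and> (\<forall>P. compact P \<and> P \<subseteq> cball x r \<inter> S \<longrightarrow>
        emeasure M P < \<infinity> \<and> (emeasure M ((top_of_set S) frontier_of P) = 0 \<longrightarrow> has_minkowski_content d P (measure M P)))"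
      by blast
    from bchoice[OF this] obtain f where "\<forall>x\<in>S. f x > 0 \<and> compact (cball x (f x) \<inter> S) \<and> (\<forall>P. compact P \<and> P \<subseteq> cball x (f x) \<inter> S \<longrightarrow>
        emeasure M P < \<infinity> \<and> (emeasure M ((top_of_set S) frontier_of P) = 0 \<longrightarrow> has_minkowski_content d P (measure M P)))" ..
    then show ?thesis using that by blast
  qed
  have \<rho>pos: "\<rho> x > 0" if "x \<in> S" for x using \<rho>[OF that] by blast
  have \<rho>c: "compact (cball x (\<rho> x) \<inter> S)" if "x \<in> S" for x using \<rho>[OF that] by blast
  have \<rho>f: "emeasure M (cball x (\<rho> x) \<inter> S) < \<infinity>" if "x \<in> S" for x
  proof -
    have "\<forall>P. compact P \<and> P \<subseteq> cball x (\<rho> x) \<inter> S \<longrightarrow> emeasure M P < \<infinity>"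
      using \<rho>[OF that] by blast
    then show ?thesis using \<rho>c[OF that] by blast
  qed
  have finP: "emeasure M P < \<infinity>" if P: "compact P" "P \<subseteq> S" for P
  proof -
    have "P \<subseteq> (\<Union>x\<in>P. ball x (\<rho> x))"
    proof
      fix y assume "y \<in> P" then show "y \<in> (\<Union>x\<in>P. ball x (\<rho> x))"
        using \<rho>pos[of y] P(2) by (intro UN_I[of y]) auto
    qed
    then obtain X where X: "X \<subseteq> P" "finite X" "P \<subseteq> (\<Union>x\<in>X. ball x (\<rho> x))"
      using compactE_image[OF P(1), of P "\<lambda>x. ball x (\<rho> x)"] by auto
    have XS: "x \<in> S" if "x \<in> X" for x using that X(1) P(2) by blast
    have mem: "cball x (\<rho> x) \<inter> S \<in> sets M" if "x \<in> X" for x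
      using cM[OF \<rho>c[OF XS[OF that]]] by blast
    have "P \<subseteq> (\<Union>x\<in>X. cball x (\<rho> x) \<inter> S)"
    proof
      fix y assume y: "y \<in> P"
      then obtain x where "x \<in> X" "y \<in> ball x (\<rho> x)" using X(3) by blast
      then show "y \<in> (\<Union>x\<in>X. cball x (\<rho> x) \<inter> S)" using y P(2) by (intro UN_I[of x]) auto
    qed
    then have "emeasure M P \<le> emeasure M (\<Union>x\<in>X. cball x (\<rho> x) \<inter> S)"
      by (rule emeasure_mono[OF _ sets.finite_UN[OF X(2) mem]])
    also have "\<dots> \<le> (\<Sum>x\<in>X. emeasure M (cball x (\<rho> x) \<inter> S))"
      using X(2) mem by (intro emeasure_subadditive_finite) auto
    also have "\<dots> < \<infinity>"
      using X(2) \<rho>f XS by (simp add: sum_Pinfty)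
    finally show ?thesis .
  qed
  show ?thesis
    unfolding minkowski_content_measure_def
  proof (intro conjI allI impI)
    show "space M = S" by (rule spM)
    show "sets M = sets (restrict_space borel S)" by (rule setsM)
    fix K assume K: "compact K \<and> K \<subseteq> S"
    then show "emeasure M K < \<infinity>" using finP by blast
    assume frK: "emeasure M ((top_of_set S) frontier_of K) = 0"
    show "has_minkowski_content d K (measure M K)"
    proof (rule content_from_pieces[where mP = "measure M"])
      show "compact K" using K by blast
      fix \<epsilon> :: real assume \<epsilon>: "\<epsilon> > 0"
      have Kc: "compact K" "K \<subseteq> S" using K by auto
      have ex: "\<exists>\<Q> \<R>. finite \<Q> \<and> finite \<R> \<and>
        (\<forall>P\<in>\<Q>\<union>\<R>. compact P \<and> (\<exists>x\<in>S. P \<subseteq> cball x (\<rho> x) \<inter> S) \<and> emeasure M ((top_of_set S) frontier_of P) = 0)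
        \<and> pairwise disjnt \<Q> \<and> \<Union>\<Q> \<subseteq> K \<and> K \<subseteq> \<Union>\<Q> \<union> \<Union>\<R>
        \<and> measure M K - \<epsilon> \<le> (\<Sum>Q\<in>\<Q>. measure M Q) \<and> (\<Sum>Q\<in>\<Q>. measure M Q) \<le> measure M K
        \<and> (\<Sum>R\<in>\<R>. measure M R) \<le> \<epsilon>"
        by (rule pieces[OF Sb setsM Kc frK \<rho>pos finP \<epsilon>])
      then obtain \<Q> \<R> where QR: "finite \<Q>" "finite \<R>"
        "\<forall>P\<in>\<Q>\<union>\<R>. compact P \<and> (\<exists>x\<in>S. P \<subseteq> cball x (\<rho> x) \<inter> S) \<and> emeasure M ((top_of_set S) frontier_of P) = 0"
        "pairwise disjnt \<Q>" "\<Union>\<Q> \<subseteq> K" "K \<subseteq> \<Union>\<Q> \<union> \<Union>\<R>"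
        "measure M K - \<epsilon> \<le> (\<Sum>Q\<in>\<Q>. measure M Q)" "(\<Sum>Q\<in>\<Q>. measure M Q) \<le> measure M K"
        "(\<Sum>R\<in>\<R>. measure M R) \<le> \<epsilon>"
        by blast
      have "compact P \<and> has_minkowski_content d P (measure M P)" if P: "P \<in> \<Q>\<union>\<R>" for P
      proof -
        obtain x where x: "x \<in> S" "P \<subseteq> cball x (\<rho> x) \<inter> S" and Pc: "compact P"
          and Pf: "emeasure M ((top_of_set S) frontier_of P) = 0"
          using QR(3) P by blast
        have "\<forall>P. compact P \<and> P \<subseteq> cball x (\<rho> x) \<inter> S \<longrightarrow>
          emeasure M P < \<infinity> \<and> (emeasure M ((top_of_set S) frontier_of P) = 0 \<longrightarrow> has_minkowski_content d P (measure M P))"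
          using \<rho>[OF x(1)] by blast
        then show ?thesis using x Pc Pf by blast
      qed
      then have "\<forall>P\<in>\<Q>\<union>\<R>. compact P \<and> has_minkowski_content d P (measure M P)" by blast
      then show "\<exists>\<Q> \<R>. finite \<Q> \<and> finite \<R> \<and> (\<forall>P\<in>\<Q>\<union>\<R>. compact P \<and> has_minkowski_content d P (measure M P))
        \<and> pairwise disjnt \<Q> \<and> \<Union>\<Q> \<subseteq> K \<and> K \<subseteq> \<Union>\<Q> \<union> \<Union>\<R>
        \<and> measure M K - \<epsilon> \<le> (\<Sum>Q\<in>\<Q>. measure M Q) \<and> (\<Sum>Q\<in>\<Q>. measure M Q) \<le> measure M K
        \<and> (\<Sum>R\<in>\<R>. measure M R) \<le> \<epsilon>"
        using QR by blast
    qed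
  qed
qed

lemma small_balls:
  fixes S T W :: "'a::euclidean_space set" and \<mu> \<nu> :: "'a measure"
  assumes SUC: "open U" "closed C" "S = U \<inter> C"
    and W: "openin (top_of_set S) W" "W \<subseteq> T"
    and s\<mu>: "sets \<mu> = sets (restrict_space borel A\<mu>)" and s\<nu>: "sets \<nu> = sets (restrict_space borel A\<nu>)"
    and m\<mu>: "\<And>P. compact P \<Longrightarrow> P \<subseteq> T \<Longrightarrow> P \<in> sets \<mu> \<and> emeasure \<mu> P < \<infinity>"
    and m\<nu>: "\<And>P. compact P \<Longrightarrow> P \<subseteq> T \<Longrightarrow> P \<in> sets \<nu> \<and> emeasure \<nu> P < \<infinity>"
  shows "\<exists>\<A>. countable \<A> \<and> \<A> \<subseteq> {P. compact P \<and> P \<subseteq> W \<and> emeasure \<mu> ((top_of_set S) frontier_of P) = 0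
      \<and> emeasure \<nu> ((top_of_set S) frontier_of P) = 0} \<and> \<Union>\<A> = W"
proof -
  obtain V where V: "open V" "W = S \<inter> V" using W(1) by (auto simp: openin_open)
  define good where "good x r \<longleftrightarrow> r > 0 \<and> compact (cball x r \<inter> S) \<and> cball x r \<inter> S \<subseteq> W
     \<and> emeasure \<mu> ((top_of_set S) frontier_of (cball x r \<inter> S)) = 0
     \<and> emeasure \<nu> ((top_of_set S) frontier_of (cball x r \<inter> S)) = 0" for x r
  have "\<exists>r. good x r" if x: "x \<in> W" for x
  proof -
    have "x \<in> V \<inter> U" using x V SUC by auto
    then obtain r0 where r0: "r0 > 0" "cball x r0 \<subseteq> V \<inter> U"
      using open_contains_cball[THEN iffD1, OF open_Int[OF V(1) SUC(1)]] by blast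
    define K0 where "K0 = cball x r0 \<inter> S"
    have K0C: "K0 = cball x r0 \<inter> C" using r0 SUC(3) unfolding K0_def by auto
    have K0c: "compact K0" unfolding K0C using SUC(2) by (simp add: compact_Int_closed)
    have K0W: "K0 \<subseteq> W" using r0 V unfolding K0_def by auto
    have K0T: "K0 \<subseteq> T" using K0W W(2) by auto
    have sph: "compact {y\<in>K0. dist x y = r}" for r
    proof -
      have "{y\<in>K0. dist x y = r} = K0 \<inter> sphere x r" by auto
      then show ?thesis using K0c by (simp add: compact_Int_closed)
    qed
    have sphT: "{y\<in>K0. dist x y = r} \<subseteq> T" for r using K0T by auto
    have c1: "countable {r. emeasure \<mu> {y\<in>K0. dist x y = r} \<noteq> 0}"
      using m\<mu>[OF K0c K0T] by (intro countable_bad_levels[OF s\<mu>]) (auto intro!: continuous_intros)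
    have c2: "countable {r. emeasure \<nu> {y\<in>K0. dist x y = r} \<noteq> 0}"
      using m\<nu>[OF K0c K0T] by (intro countable_bad_levels[OF s\<nu>]) (auto intro!: continuous_intros)
    obtain r where r: "0 < r" "r < r0"
      "r \<notin> {r. emeasure \<mu> {y\<in>K0. dist x y = r} \<noteq> 0} \<union> {r. emeasure \<nu> {y\<in>K0. dist x y = r} \<noteq> 0}"
    proof -
      have "countable ({r. emeasure \<mu> {y\<in>K0. dist x y = r} \<noteq> 0} \<union> {r. emeasure \<nu> {y\<in>K0. dist x y = r} \<noteq> 0})"
        using c1 c2 by (rule countable_Un)
      from avoid_countable[OF r0(1) this] that show ?thesis by blast
    qed
    define P where "P = cball x r \<inter> S"
    have PK0: "P \<subseteq> K0" using r unfolding P_def K0_def by auto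
    have PC: "P = K0 \<inter> cball x r" unfolding P_def K0_def using r by auto
    have Pc: "compact P" unfolding PC using K0c by (simp add: compact_Int_closed)
    have PS: "P \<subseteq> S" unfolding P_def by auto
    have fr: "(top_of_set S) frontier_of P \<subseteq> {y\<in>K0. dist x y = r}"
    proof
      fix y assume y: "y \<in> (top_of_set S) frontier_of P"
      then have yP: "y \<in> P" using frontier_compact(1)[OF Pc PS] by auto
      have "\<not> dist x y < r"
      proof
        assume "dist x y < r"
        then have "y \<notin> (top_of_set S) frontier_of P"
          by (intro not_in_frontier[OF yP open_ball _ _ PS, of x r]) (auto simp: P_def)
        then show False using y by simp
      qed
      then show "y \<in> {y\<in>K0. dist x y = r}" using yP PK0 by (auto simp: P_def)
    qed
    have frT: "(top_of_set S) frontier_of P \<subseteq> T"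
      using frontier_compact(1)[OF Pc PS] PK0 K0T by auto
    have frc: "compact ((top_of_set S) frontier_of P)" using frontier_compact(2)[OF Pc PS] .
    have n1: "emeasure \<mu> ((top_of_set S) frontier_of P) = 0"
    proof -
      have "{y\<in>K0. dist x y = r} \<in> null_sets \<mu>" using r(3) m\<mu>[OF sph sphT] by auto
      then show ?thesis using null_sets_subset[OF _ conjunct1[OF m\<mu>[OF frc frT]] fr] by auto
    qed
    have n2: "emeasure \<nu> ((top_of_set S) frontier_of P) = 0"
    proof -
      have "{y\<in>K0. dist x y = r} \<in> null_sets \<nu>" using r(3) m\<nu>[OF sph sphT] by auto
      then show ?thesis using null_sets_subset[OF _ conjunct1[OF m\<nu>[OF frc frT]] fr] by auto
    qed
    have "good x r" unfolding good_def using r(1) Pc PK0 K0W n1 n2 unfolding P_def by blast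
    then show ?thesis ..
  qed
  then have "\<forall>x\<in>W. \<exists>r. good x r" by blast
  from bchoice[OF this] obtain r where r: "\<forall>x\<in>W. good x (r x)" ..
  obtain \<F>' where F': "\<F>' \<subseteq> (\<lambda>x. ball x (r x)) ` W" "countable \<F>'" "\<Union>\<F>' = \<Union>((\<lambda>x. ball x (r x)) ` W)"
    using Lindelof[of "(\<lambda>x. ball x (r x)) ` W"] by auto
  obtain X where X: "countable X" "X \<subseteq> W" "\<F>' = (\<lambda>x. ball x (r x)) ` X"
    using F'(1,2) countable_subset_image[of \<F>' "\<lambda>x. ball x (r x)" W] by blast
  define \<A> where "\<A> = (\<lambda>x. cball x (r x) \<inter> S) ` X"
  have "countable \<A>" unfolding \<A>_def using X(1) by simp
  moreover have "\<A> \<subseteq> {P. compact P \<and> P \<subseteq> W \<and> emeasure \<mu> ((top_of_set S) frontier_of P) = 0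
      \<and> emeasure \<nu> ((top_of_set S) frontier_of P) = 0}"
    unfolding \<A>_def using r X(2) unfolding good_def by blast
  moreover have "\<Union>\<A> = W"
  proof
    show "\<Union>\<A> \<subseteq> W" unfolding \<A>_def using r X(2) unfolding good_def by blast
    show "W \<subseteq> \<Union>\<A>"
    proof
      fix y assume y: "y \<in> W"
      then have "y \<in> ball y (r y)" using r unfolding good_def by auto
      then have "y \<in> \<Union>\<F>'" using F'(3) y by blast
      then obtain x where "x \<in> X" "y \<in> ball x (r x)" using X(3) by blast
      moreover have "y \<in> S" using y V by auto
      ultimately show "y \<in> \<Union>\<A>" unfolding \<A>_def by (intro UnionI[of "cball x (r x) \<inter> S"]) auto
    qed
  qed
  ultimately show ?thesis by blast
qed

lemma mem_restrict_borel: "X \<in> sets borel \<Longrightarrow> X \<subseteq> A \<Longrightarrow> X \<in> sets (restrict_space borel A)"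
  by (auto simp: sets_restrict_space image_iff intro!: bexI[of _ X])

lemma minkowski_content_unique:
  "has_minkowski_content d P a \<Longrightarrow> has_minkowski_content d P b \<Longrightarrow> a = b"
  unfolding has_minkowski_content_def by (rule tendsto_unique[rotated]) auto

lemma uniq:
  fixes S T A\<mu> A\<nu> :: "'a::euclidean_space set" and \<mu> \<nu> :: "'a measure"
  assumes SUC: "open U" "closed C" "S = U \<inter> C"
    and T: "openin (top_of_set S) T" "T \<subseteq> A\<mu>" "T \<subseteq> A\<nu>"
    and s\<mu>: "sets \<mu> = sets (restrict_space borel A\<mu>)" and s\<nu>: "sets \<nu> = sets (restrict_space borel A\<nu>)"
    and h\<mu>: "\<And>P. compact P \<Longrightarrow> P \<subseteq> T \<Longrightarrow> emeasure \<mu> P < \<infinity> \<and>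
       (emeasure \<mu> ((top_of_set S) frontier_of P) = 0 \<longrightarrow> has_minkowski_content d P (measure \<mu> P))"
    and h\<nu>: "\<And>P. compact P \<Longrightarrow> P \<subseteq> T \<Longrightarrow> emeasure \<nu> P < \<infinity> \<and>
       (emeasure \<nu> ((top_of_set S) frontier_of P) = 0 \<longrightarrow> has_minkowski_content d P (measure \<nu> P))"
    and X: "X \<in> sets borel" "X \<subseteq> T"
  shows "emeasure \<mu> X = emeasure \<nu> X"
proof -
  have memb\<mu>: "Y \<in> sets \<mu>" if "Y \<in> sets borel" "Y \<subseteq> T" for Y
    using that T(2) by (simp add: s\<mu> mem_restrict_borel)
  have memb\<nu>: "Y \<in> sets \<nu>" if "Y \<in> sets borel" "Y \<subseteq> T" for Y
    using that T(3) by (simp add: s\<nu> mem_restrict_borel)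
  have m\<mu>: "P \<in> sets \<mu> \<and> emeasure \<mu> P < \<infinity>" if "compact P" "P \<subseteq> T" for P
    using that h\<mu> memb\<mu> by (simp add: borel_closed compact_imp_closed)
  have m\<nu>: "P \<in> sets \<nu> \<and> emeasure \<nu> P < \<infinity>" if "compact P" "P \<subseteq> T" for P
    using that h\<nu> memb\<nu> by (simp add: borel_closed compact_imp_closed)
  obtain V where V: "open V" "T = S \<inter> V" using T(1) by (auto simp: openin_open)
  have Tb: "T \<in> sets borel" using V SUC by (simp add: borel_open borel_closed sets.Int)
  define E where "E = {P. compact P \<and> P \<subseteq> T \<and> emeasure \<mu> ((top_of_set S) frontier_of P) = 0
      \<and> emeasure \<nu> ((top_of_set S) frontier_of P) = 0}"
  have cover: "\<exists>\<A>. countable \<A> \<and> \<A> \<subseteq> E \<and> \<Union>\<A> = T \<inter> Ob" if "open Ob" for Ob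
  proof -
    have Wo: "openin (top_of_set S) (T \<inter> Ob)" using T(1) that by (auto intro: openin_Int_open)
    have "\<exists>\<A>. countable \<A> \<and> \<A> \<subseteq> {P. compact P \<and> P \<subseteq> T \<inter> Ob \<and> emeasure \<mu> ((top_of_set S) frontier_of P) = 0
      \<and> emeasure \<nu> ((top_of_set S) frontier_of P) = 0} \<and> \<Union>\<A> = T \<inter> Ob"
      by (rule small_balls[OF SUC Wo Int_lower1 s\<mu> s\<nu> m\<mu> m\<nu>])
    then obtain \<A> where A1: "countable \<A>" and A2: "\<A> \<subseteq> {P. compact P \<and> P \<subseteq> T \<inter> Ob \<and> emeasure \<mu> ((top_of_set S) frontier_of P) = 0
      \<and> emeasure \<nu> ((top_of_set S) frontier_of P) = 0}" and A3: "\<Union>\<A> = T \<inter> Ob"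
      by (elim exE conjE)
    have "\<A> \<subseteq> E" unfolding E_def using A2 by auto
    then show ?thesis using A1 A3 by blast
  qed
  have spT: "space (restrict_space borel T) = T" by (simp add: space_restrict_space)
  have EPow: "E \<subseteq> Pow T" unfolding E_def by auto
  have sigE: "sets (restrict_space borel T) = sigma_sets T E"
  proof
    show "sigma_sets T E \<subseteq> sets (restrict_space borel T)"
    proof -
      have "E \<subseteq> sets (restrict_space borel T)"
        unfolding E_def by (auto intro!: mem_restrict_borel borel_closed compact_imp_closed)
      from sets.sigma_sets_subset[OF this] show ?thesis unfolding spT .
    qed
    show "sets (restrict_space borel T) \<subseteq> sigma_sets T E"
    proof -
      have "sets (restrict_space borel T) = (\<inter>) T ` sigma_sets UNIV {S. open S}"
        by (simp add: sets_restrict_space sets_borel)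
      also have "\<dots> = sigma_sets T ((\<inter>) T ` {S. open S})"
        using Tb by (intro sigma_sets_Int) (auto simp: sets_borel)
      also have "\<dots> \<subseteq> sigma_sets T E"
      proof (rule sigma_sets_mono, rule subsetI)
        fix Y assume "Y \<in> (\<inter>) T ` {S. open S}"
        then obtain Ob where O: "open Ob" "Y = T \<inter> Ob" by auto
        obtain \<A> where A: "countable \<A>" "\<A> \<subseteq> E" "\<Union>\<A> = T \<inter> Ob" using cover[OF O(1)] by blast
        have "\<Union>\<A> \<in> sigma_sets T E" using A by (intro sigma_sets_UNION) auto
        then show "Y \<in> sigma_sets T E" using A O by simp
      qed
      finally show ?thesis .
    qed
  qed
  define \<mu>T where "\<mu>T = restrict_space \<mu> T"
  define \<nu>T where "\<nu>T = restrict_space \<nu> T"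
  have sp\<mu>: "space \<mu> = A\<mu>" using sets_eq_imp_space_eq[OF s\<mu>] by (simp add: space_restrict_space)
  have sp\<nu>: "space \<nu> = A\<nu>" using sets_eq_imp_space_eq[OF s\<nu>] by (simp add: space_restrict_space)
  have Tin\<mu>: "T \<inter> space \<mu> \<in> sets \<mu>" using sp\<mu> T(2) Tb memb\<mu> by (simp add: Int_absorb2)
  have Tin\<nu>: "T \<inter> space \<nu> \<in> sets \<nu>" using sp\<nu> T(3) Tb memb\<nu> by (simp add: Int_absorb2)
  have e\<mu>: "emeasure \<mu>T Y = emeasure \<mu> Y" if "Y \<subseteq> T" for Y
    unfolding \<mu>T_def using Tin\<mu> that by (rule emeasure_restrict_space)
  have e\<nu>: "emeasure \<nu>T Y = emeasure \<nu> Y" if "Y \<subseteq> T" for Y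
    unfolding \<nu>T_def using Tin\<nu> that by (rule emeasure_restrict_space)
  have ss\<mu>: "sets \<mu>T = sets (restrict_space borel T)"
  proof -
    have "sets \<mu>T = (\<inter>) T ` sets (restrict_space borel A\<mu>)"
      unfolding \<mu>T_def by (simp add: sets_restrict_space s\<mu>)
    also have "\<dots> = sets (restrict_space (restrict_space borel A\<mu>) T)"
      by (simp add: sets_restrict_space)
    also have "\<dots> = sets (restrict_space borel T)"
      using T(2) by (simp add: sets_restrict_restrict_space Int_absorb1)
    finally show ?thesis .
  qed
  have ss\<nu>: "sets \<nu>T = sets (restrict_space borel T)"
  proof -
    have "sets \<nu>T = (\<inter>) T ` sets (restrict_space borel A\<nu>)"
      unfolding \<nu>T_def by (simp add: sets_restrict_space s\<nu>)
    also have "\<dots> = sets (restrict_space (restrict_space borel A\<nu>) T)"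
      by (simp add: sets_restrict_space)
    also have "\<dots> = sets (restrict_space borel T)"
      using T(3) by (simp add: sets_restrict_restrict_space Int_absorb1)
    finally show ?thesis .
  qed
  have Int_stable: "Int_stable E"
  proof (rule Int_stableI)
    fix P Q assume P: "P \<in> E" and Q: "Q \<in> E"
    have PQc: "compact (P \<inter> Q)" using P Q unfolding E_def by (auto intro: compact_Int)
    have PQT: "P \<inter> Q \<subseteq> T" using P unfolding E_def by auto
    have TS: "T \<subseteq> S" using V by auto
    have fr: "(top_of_set S) frontier_of (P \<inter> Q) \<subseteq> (top_of_set S) frontier_of P \<union> (top_of_set S) frontier_of Q"
      by (rule frontier_of_Int_subset)
    have frc: "compact ((top_of_set S) frontier_of (P \<inter> Q))"
      and frs: "(top_of_set S) frontier_of (P \<inter> Q) \<subseteq> P \<inter> Q"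
      using frontier_compact[OF PQc] PQT TS by auto
    have cP: "compact P" "P \<subseteq> T" "compact Q" "Q \<subseteq> T" using P Q unfolding E_def by auto
    have frPc: "compact ((top_of_set S) frontier_of P)" "(top_of_set S) frontier_of P \<subseteq> T"
      using frontier_compact[of P S] cP TS by auto
    have frQc: "compact ((top_of_set S) frontier_of Q)" "(top_of_set S) frontier_of Q \<subseteq> T"
      using frontier_compact[of Q S] cP TS by auto
    have n\<mu>: "(top_of_set S) frontier_of P \<union> (top_of_set S) frontier_of Q \<in> null_sets \<mu>"
      using P Q m\<mu>[OF frPc] m\<mu>[OF frQc] unfolding E_def by (intro null_sets.Un) auto
    have n\<nu>: "(top_of_set S) frontier_of P \<union> (top_of_set S) frontier_of Q \<in> null_sets \<nu>"
      using P Q m\<nu>[OF frPc] m\<nu>[OF frQc] unfolding E_def by (intro null_sets.Un) auto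
    have "(top_of_set S) frontier_of (P \<inter> Q) \<in> null_sets \<mu>"
      using null_sets_subset[OF n\<mu> _ fr] m\<mu>[OF frc] frs PQT by auto
    moreover have "(top_of_set S) frontier_of (P \<inter> Q) \<in> null_sets \<nu>"
      using null_sets_subset[OF n\<nu> _ fr] m\<nu>[OF frc] frs PQT by auto
    ultimately show "P \<inter> Q \<in> E" unfolding E_def using PQc PQT by auto
  qed
  have agree: "emeasure \<mu>T P = emeasure \<nu>T P" if P: "P \<in> E" for P
  proof -
    have Pc: "compact P" "P \<subseteq> T" using P unfolding E_def by auto
    have c1: "has_minkowski_content d P (measure \<mu> P)" using h\<mu>[OF Pc] P unfolding E_def by auto
    have c2: "has_minkowski_content d P (measure \<nu> P)" using h\<nu>[OF Pc] P unfolding E_def by auto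
    have eq: "measure \<mu> P = measure \<nu> P" using minkowski_content_unique[OF c1 c2] .
    have "emeasure \<mu> P = emeasure \<nu> P"
      using eq h\<mu>[OF Pc] h\<nu>[OF Pc] by (simp add: emeasure_eq_ennreal_measure less_top)
    then show ?thesis using e\<mu>[OF Pc(2)] e\<nu>[OF Pc(2)] by simp
  qed
  obtain \<A> where A: "countable \<A>" "\<A> \<subseteq> E" "\<Union>\<A> = T" using cover[of UNIV] by auto
  have "\<mu>T = \<nu>T"
  proof (rule measure_eqI_generator_eq_countable[OF Int_stable EPow agree _ _ A(2,3,1)])
    show "sets \<mu>T = sigma_sets T E" using ss\<mu> sigE by simp
    show "sets \<nu>T = sigma_sets T E" using ss\<nu> sigE by simp
    fix a assume "a \<in> \<A>"
    then have "compact a" "a \<subseteq> T" using A(2) unfolding E_def by auto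
    then show "emeasure \<mu>T a \<noteq> \<infinity>" using e\<mu> m\<mu> by (simp add: less_top)
  qed
  then show ?thesis using e\<mu>[OF X(2)] e\<nu>[OF X(2)] by simp
qed

lemma suminf_swap_ennreal:
  fixes f :: "nat \<Rightarrow> nat \<Rightarrow> ennreal"
  shows "(\<Sum>i. \<Sum>j. f i j) = (\<Sum>j. \<Sum>i. f i j)"
proof -
  have "(\<Sum>i. \<Sum>j. f i j) = (\<Sum>i. \<integral>\<^sup>+j. f i j \<partial>count_space UNIV)"
    by (simp add: nn_integral_count_space_nat)
  also have "\<dots> = (\<integral>\<^sup>+j. (\<Sum>i. f i j) \<partial>count_space UNIV)"
    by (rule nn_integral_suminf[symmetric]) simp
  also have "\<dots> = (\<Sum>j. \<Sum>i. f i j)" by (simp add: nn_integral_count_space_nat)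
  finally show ?thesis .
qed

theorem lemma2p4:
  fixes S :: "'a::euclidean_space set" and d :: real
    and \<Lambda> :: "'i set" and SS :: "'i \<Rightarrow> 'a set"
  assumes "0 < d" and "d < real DIM('a)"
    and "\<exists>U C. open U \<and> closed C \<and> S = U \<inter> C"
    and "\<And>l. l \<in> \<Lambda> \<Longrightarrow> openin (top_of_set S) (SS l)"
    and "S = (\<Union>l\<in>\<Lambda>. SS l)"
    and "\<And>l. l \<in> \<Lambda> \<Longrightarrow> \<exists>M. minkowski_content_measure d (SS l) M"
  shows "\<exists>M. minkowski_content_measure d S M"
proof -
  obtain U C where SUC: "open U" "closed C" "S = U \<inter> C" using assms(3) by blast
  have Sb: "S \<in> sets borel" using SUC by (simp add: borel_open borel_closed sets.Int)
  have "\<forall>l\<in>\<Lambda>. \<exists>M. minkowski_content_measure d (SS l) M" using assms(6) by blast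
  from bchoice[OF this] obtain Mf where Mf: "\<forall>l\<in>\<Lambda>. minkowski_content_measure d (SS l) (Mf l)" ..
  show ?thesis
  proof (cases "S = {}")
    case True
    have "minkowski_content_measure d S (restrict_space borel S)"
      by (rule local_to_global[OF SUC]) (auto simp: space_restrict_space True)
    then show ?thesis ..
  next
    case False
    obtain F' where F': "F' \<subseteq> SS ` \<Lambda>" "countable F'" "\<Union>F' = \<Union>(SS ` \<Lambda>)"
      using Lindelof_openin[of "SS ` \<Lambda>" S] assms(4) by auto
    obtain \<Lambda>' where L': "countable \<Lambda>'" "\<Lambda>' \<subseteq> \<Lambda>" "F' = SS ` \<Lambda>'"
      using F'(1,2) countable_subset_image[of F' SS \<Lambda>] by blast
    have S': "S = (\<Union>l\<in>\<Lambda>'. SS l)" using F'(3) L'(3) assms(5) by simp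
    have ne: "\<Lambda>' \<noteq> {}" using S' False by auto
    define lk where "lk = from_nat_into \<Lambda>'"
    have lkL: "lk n \<in> \<Lambda>" for n using from_nat_into[OF ne] L'(2) unfolding lk_def by auto
    have rg: "range lk = \<Lambda>'" unfolding lk_def using range_from_nat_into[OF ne L'(1)] .
    define Sk where "Sk n = SS (lk n)" for n
    define Mk where "Mk n = Mf (lk n)" for n
    have Scov: "S = (\<Union>n. Sk n)"
    proof -
      have "(\<Union>n. Sk n) = (\<Union>l\<in>range lk. SS l)" unfolding Sk_def by auto
      then show ?thesis using S' rg by simp
    qed
    have MCk: "minkowski_content_measure d (Sk n) (Mk n)" for n
      using Mf lkL unfolding Sk_def Mk_def by blast
    have Sko: "openin (top_of_set S) (Sk n)" for n using assms(4) lkL unfolding Sk_def by blast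
    have SkS: "Sk n \<subseteq> S" for n using openin_imp_subset[OF Sko] by simp
    have Skb: "Sk n \<in> sets borel" for n
    proof -
      obtain V where "open V" "Sk n = S \<inter> V" using Sko[of n] by (auto simp: openin_open)
      then show ?thesis using Sb by (simp add: borel_open sets.Int)
    qed
    have setsk: "sets (Mk n) = sets (restrict_space borel (Sk n))" for n
      using MCk[of n] unfolding minkowski_content_measure_def by blast
    have spk: "space (Mk n) = Sk n" for n
      using MCk[of n] unfolding minkowski_content_measure_def by blast
    have hk: "emeasure (Mk n) P < \<infinity> \<and>
       (emeasure (Mk n) ((top_of_set S) frontier_of P) = 0 \<longrightarrow> has_minkowski_content d P (measure (Mk n) P))"
      if P: "compact P" "P \<subseteq> Sk n" for n P
    proof -
      have "\<forall>K. compact K \<and> K \<subseteq> Sk n \<longrightarrow> emeasure (Mk n) K < \<infinity> \<and>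
          (emeasure (Mk n) ((top_of_set (Sk n)) frontier_of K) = 0 \<longrightarrow> has_minkowski_content d K (measure (Mk n) K))"
        using MCk[of n] unfolding minkowski_content_measure_def by blast
      then have "emeasure (Mk n) P < \<infinity> \<and>
          (emeasure (Mk n) ((top_of_set (Sk n)) frontier_of P) = 0 \<longrightarrow> has_minkowski_content d P (measure (Mk n) P))"
        using P by blast
      then show ?thesis using frontier_open_sub[OF Sko P(1) P(2)] by simp
    qed
    have agree: "emeasure (Mk k) X = emeasure (Mk m) X"
      if X: "X \<in> sets borel" "X \<subseteq> Sk k \<inter> Sk m" for k m X
    proof (rule uniq[OF SUC openin_Int[OF Sko Sko] Int_lower1 Int_lower2 setsk setsk _ _ X])
      fix P assume "compact P" "P \<subseteq> Sk k \<inter> Sk m"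
      then show "emeasure (Mk k) P < \<infinity> \<and>
       (emeasure (Mk k) ((top_of_set S) frontier_of P) = 0 \<longrightarrow> has_minkowski_content d P (measure (Mk k) P))"
        "emeasure (Mk m) P < \<infinity> \<and>
       (emeasure (Mk m) ((top_of_set S) frontier_of P) = 0 \<longrightarrow> has_minkowski_content d P (measure (Mk m) P))"
        using hk by auto
    qed
    define D where "D = disjointed Sk"
    have Dsub: "D n \<subseteq> Sk n" for n unfolding D_def by (rule disjointed_subset)
    have Ddisj: "disjoint_family D" unfolding D_def by (rule disjoint_family_disjointed)
    have DU: "(\<Union>n. D n) = S" unfolding D_def UN_disjointed_eq using Scov by simp
    have Db: "D n \<in> sets borel" for n
      unfolding D_def disjointed_def using Skb by (intro sets.Diff sets.finite_UN) auto
    define SA where "SA = sets (restrict_space borel S)"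
    have inSA: "A \<in> SA \<longleftrightarrow> A \<subseteq> S \<and> A \<in> sets borel" for A
      unfolding SA_def using Sb by (simp add: sets_restrict_space_iff)
    have memk: "A \<inter> D n \<in> sets (Mk m)" if "A \<in> SA" "D n \<subseteq> Sk m" for A n m
      using that Db unfolding setsk inSA by (intro mem_restrict_borel) auto
    define \<mu> where "\<mu> A = (\<Sum>n. emeasure (Mk n) (A \<inter> D n))" for A
    have sa: "sigma_algebra S SA"
      using measure_space[of "restrict_space borel S"]
      by (simp add: measure_space_def space_restrict_space SA_def)
    have pos: "positive SA \<mu>" unfolding positive_def \<mu>_def by simp
    have ca: "countably_additive SA \<mu>"
    proof (rule countably_additiveI)
      fix A :: "nat \<Rightarrow> 'a set" assume A: "range A \<subseteq> SA" "disjoint_family A" "(\<Union>i. A i) \<in> SA"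
      have "(\<Sum>i. \<mu> (A i)) = (\<Sum>n. \<Sum>i. emeasure (Mk n) (A i \<inter> D n))"
        unfolding \<mu>_def by (rule suminf_swap_ennreal)
      also have "\<dots> = (\<Sum>n. emeasure (Mk n) (\<Union>i. A i \<inter> D n))"
      proof (rule suminf_cong)
        fix n
        show "(\<Sum>i. emeasure (Mk n) (A i \<inter> D n)) = emeasure (Mk n) (\<Union>i. A i \<inter> D n)"
        proof (rule suminf_emeasure)
          show "range (\<lambda>i. A i \<inter> D n) \<subseteq> sets (Mk n)" using A(1) memk Dsub by auto
          show "disjoint_family (\<lambda>i. A i \<inter> D n)"
            using A(2) unfolding disjoint_family_on_def by auto
        qed
      qed
      also have "\<dots> = \<mu> (\<Union>i. A i)" unfolding \<mu>_def by simp
      finally show "(\<Sum>i. \<mu> (A i)) = \<mu> (\<Union>i. A i)" .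
    qed
    define M where "M = measure_of S SA \<mu>"
    have eM: "emeasure M A = \<mu> A" if "A \<in> SA" for A
      unfolding M_def by (rule emeasure_measure_of_sigma[OF sa pos ca that])
    have spM: "space M = S" unfolding M_def using sa by (simp add: sigma_algebra.space_measure_of_eq)
    have setsM: "sets M = sets (restrict_space borel S)"
      unfolding M_def using sa by (simp add: sigma_algebra.sets_measure_of_eq SA_def)
    have G3: "emeasure M A = emeasure (Mk m) A" if A: "A \<in> SA" "A \<subseteq> Sk m" for A m
    proof -
      have "emeasure M A = (\<Sum>n. emeasure (Mk n) (A \<inter> D n))" using eM[OF A(1)] by (simp add: \<mu>_def)
      also have "\<dots> = (\<Sum>n. emeasure (Mk m) (A \<inter> D n))"
      proof (rule suminf_cong)
        fix n
        show "emeasure (Mk n) (A \<inter> D n) = emeasure (Mk m) (A \<inter> D n)"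
          using A Dsub[of n] Db[of n] unfolding inSA by (intro agree) auto
      qed
      also have "\<dots> = emeasure (Mk m) (\<Union>n. A \<inter> D n)"
      proof (rule suminf_emeasure)
        show "range (\<lambda>n. A \<inter> D n) \<subseteq> sets (Mk m)"
          using A Db unfolding setsk inSA by (auto intro!: mem_restrict_borel)
        show "disjoint_family (\<lambda>n. A \<inter> D n)"
          using Ddisj unfolding disjoint_family_on_def by auto
      qed
      also have "(\<Union>n. A \<inter> D n) = A" using DU A(1) unfolding inSA by auto
      finally show ?thesis .
    qed
    have "minkowski_content_measure d S M"
    proof (rule local_to_global[OF SUC spM setsM])
      fix x assume x: "x \<in> S"
      then obtain m where m: "x \<in> Sk m" using Scov by auto
      obtain V where V: "open V" "Sk m = S \<inter> V" using Sko[of m] by (auto simp: openin_open)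
      obtain \<rho> where \<rho>: "\<rho> > 0" "cball x \<rho> \<subseteq> V"
        using open_contains_cball[THEN iffD1, OF V(1)] m V(2) by blast
      have "compact P \<and> P \<subseteq> cball x \<rho> \<inter> S \<longrightarrow>
        emeasure M P < \<infinity> \<and> (emeasure M ((top_of_set S) frontier_of P) = 0 \<longrightarrow> has_minkowski_content d P (measure M P))"
        for P
      proof
        assume P: "compact P \<and> P \<subseteq> cball x \<rho> \<inter> S"
        have Pk: "P \<subseteq> Sk m" using P \<rho> V by auto
        have PS: "P \<subseteq> S" using P by auto
        have PSA: "P \<in> SA" using P by (simp add: inSA borel_closed compact_imp_closed)
        have fr: "(top_of_set S) frontier_of P \<subseteq> P" "compact ((top_of_set S) frontier_of P)"
          using frontier_compact[of P S] P by auto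
        have frSA: "(top_of_set S) frontier_of P \<in> SA"
          using fr PS by (simp add: inSA borel_closed compact_imp_closed)
        have e1: "emeasure M P = emeasure (Mk m) P" using G3[OF PSA Pk] .
        have e2: "emeasure M ((top_of_set S) frontier_of P) = emeasure (Mk m) ((top_of_set S) frontier_of P)"
          using G3[OF frSA] fr(1) Pk by blast
        have e3: "measure M P = measure (Mk m) P" unfolding measure_def e1 ..
        show "emeasure M P < \<infinity> \<and> (emeasure M ((top_of_set S) frontier_of P) = 0 \<longrightarrow> has_minkowski_content d P (measure M P))"
          using hk[of P m] P Pk e1 e2 e3 by simp
      qed
      then show "\<exists>\<rho>>0. \<forall>P. compact P \<and> P \<subseteq> cball x \<rho> \<inter> S \<longrightarrow>
        emeasure M P < \<infinity> \<and> (emeasure M ((top_of_set S) frontier_of P) = 0 \<longrightarrow> has_minkowski_content d P (measure M P))"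
        using \<rho>(1) by blast
    qed
    then show ?thesis ..
  qed
qed

end
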